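(* Let $A=(0,0)$ and $B=(b_1,b_2)$ with $b_1>0$ and $0\le b_2\le b_1-1$, and let $s=b_2/b_1$ and $Q=(1-s)(1,0)+s(3/2,1/2)$. For $k\in(0,1)$ let $P_k=(1-k)(1,1)+kQ$ and $\gamma_k(t)=Bt^3+3P_kt^2(1-t)+3P_kt(1-t)^2$, $0\le t\le1$. If $k_1>k_2$ are in $(0,1)$, then the curves $\gamma_1=\gamma_{k_1}$ and $\gamma_2=\gamma_{k_2}$ do not intersect except at their common endpoints $A$ and $B$, and, except at the endpoints, $\gamma_2$ lies above $\gamma_1$.
   Context: Each $\gamma_k$ is the cubic B\'ezier curve with endpoints $A=\gamma_k(0)$, $B=\gamma_k(1)$ and both inner control points equal to $P_k$. *)

theory Defs
  imports "HOL-Analysis.Analysis"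
begin

definition Qpt :: "real \<times> real \<Rightarrow> real \<times> real" where
  "Qpt B = (let s = snd B / fst B in (1 - s) *\<^sub>R (1, 0) + s *\<^sub>R (3/2, 1/2))"

definition Ppt :: "real \<times> real \<Rightarrow> real \<Rightarrow> real \<times> real" where
  "Ppt B k = (1 - k) *\<^sub>R (1, 1) + k *\<^sub>R Qpt B"

definition gam :: "real \<times> real \<Rightarrow> real \<Rightarrow> real \<Rightarrow> real \<times> real" where
  "gam B k t = t ^ 3 *\<^sub>R B + (3 * t ^ 2 * (1 - t)) *\<^sub>R Ppt B k
                + (3 * t * (1 - t) ^ 2) *\<^sub>R Ppt B k"

end

theory Submission
  imports Defs
begin

lemma gam_eq:
  assumes "b1 \<noteq> 0"
  shows "gam (b1, b2) k t = (b1 * t^3 + 3*t*(1-t)*(1 + k*(b2/b1/2)),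
     b2 * t^3 + 3*t*(1-t)*(1 - k + k*(b2/b1/2)))"
  using assms
  by (simp add: gam_def Ppt_def Qpt_def Let_def prod_eq_iff algebra_simps power2_eq_square power3_eq_cube)

lemma cubic_mono:
  fixes m a t r :: real
  assumes "a \<le> m" "0 < a" "0 \<le> t" "t < r" "r \<le> 1"
  shows "m*t^3 + 3*a*t*(1-t) < m*r^3 + 3*a*r*(1-r)"
proof -
  have q: "0 < (r-1)^2 + (r-1)*(t-1) + (t-1)^2"
  proof -
    have "(r-1)^2 + (r-1)*(t-1) + (t-1)^2 = ((r-1) + (t-1)/2)^2 + 3/4*(t-1)^2"
      by (simp add: power2_eq_square field_simps)
    moreover have "0 < (t-1)^2" using assms by simp
    moreover have "0 \<le> ((r-1) + (t-1)/2)^2" by simp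
    ultimately show ?thesis by linarith
  qed
  have e: "r^2 + r*t + t^2 + 3*(1-r-t) = (r-1)^2 + (r-1)*(t-1) + (t-1)^2"
    by (simp add: algebra_simps power2_eq_square)
  have g: "0 \<le> r^2 + r*t + t^2" using assms by simp
  have h1: "a*(r^2 + r*t + t^2) \<le> m*(r^2 + r*t + t^2)"
    using g assms by (simp add: mult_right_mono)
  have h2: "a*(r^2 + r*t + t^2) + 3*a*(1-r-t) = a*((r-1)^2 + (r-1)*(t-1) + (t-1)^2)"
    unfolding e[symmetric] by (simp add: algebra_simps)
  have h3: "0 < a*((r-1)^2 + (r-1)*(t-1) + (t-1)^2)" using q assms by simp
  have "0 < m*(r^2 + r*t + t^2) + 3*a*(1-r-t)" using h1 h2 h3 by linarith
  hence "0 < (r-t)*(m*(r^2 + r*t + t^2) + 3*a*(1-r-t))" using assms by simp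
  moreover have "(r-t)*(m*(r^2 + r*t + t^2) + 3*a*(1-r-t)) =
     (m*r^3 + 3*a*r*(1-r)) - (m*t^3 + 3*a*t*(1-t))"
    by (simp add: algebra_simps power2_eq_square power3_eq_cube)
  ultimately show ?thesis by simp
qed

lemma cubic_inj:
  fixes m a t r :: real
  assumes "a \<le> m" "0 < a" "0 \<le> t" "t \<le> 1" "0 \<le> r" "r \<le> 1"
   and "m*t^3 + 3*a*t*(1-t) = m*r^3 + 3*a*r*(1-r)"
  shows "t = r"
  using cubic_mono[OF assms(1,2)] assms by (metis linorder_neqE_linordered_idom order_less_irrefl)

theorem lemma8:
  fixes b1 b2 k1 k2 :: real
  assumes "b1 > 0" and "0 \<le> b2" and "b2 \<le> b1 - 1"
    and "0 < k1" and "k1 < 1" and "0 < k2" and "k2 < 1" and "k1 > k2"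
  shows "path_image (gam (b1, b2) k1) \<inter> path_image (gam (b1, b2) k2) \<subseteq> {(0, 0), (b1, b2)} \<and>
         (\<forall>t1 \<in> {0<..<1}. \<forall>t2 \<in> {0<..<1}.
           fst (gam (b1, b2) k1 t1) = fst (gam (b1, b2) k2 t2) \<longrightarrow>
           snd (gam (b1, b2) k2 t2) > snd (gam (b1, b2) k1 t1))"
proof -
  define c where "c = b2/b1/2"
  have c0: "0 \<le> c" using assms by (simp add: c_def)
  have c1: "c < 1/2" using assms by (simp add: c_def field_simps)
  have G: "\<And>k t. gam (b1, b2) k t = (b1 * t^3 + 3*t*(1-t)*(1 + k*c),
     b2 * t^3 + 3*t*(1-t)*(1 - k + k*c))"
    using gam_eq assms(1) unfolding c_def by simp
  define m where "m = b1*(1-c) + c*b2"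
  have cb1: "c*b1 = b2/2" using assms(1) unfolding c_def by simp
  have "0 \<le> c*b2" using c0 assms by simp
  hence m1: "1 \<le> m" using cb1 assms unfolding m_def by (simp add: algebra_simps)
  have W: "\<And>k t. (1-c) * fst (gam (b1, b2) k t) + c * snd (gam (b1, b2) k t)
      = m*t^3 + 3*1*t*(1-t)"
    unfolding G m_def fst_conv snd_conv by algebra
  have ab: "\<And>k. 0 < k \<Longrightarrow> k < 1 \<Longrightarrow> 1 + k*c \<le> b1"
  proof -
    fix k :: real assume "0 < k" "k < 1"
    hence "k*c \<le> c" using c0 by (simp add: mult_left_le_one_le)
    moreover have "c \<le> b2"
    proof -
      have "c * 1 \<le> c * b1" using c0 assms by (intro mult_left_mono) auto
      thus ?thesis using cb1 assms by simp
    qed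
    ultimately show "1 + k*c \<le> b1" using assms by linarith
  qed
  have ydiff: "\<And>t. snd (gam (b1, b2) k2 t) - snd (gam (b1, b2) k1 t)
     = 3*t*(1-t)*(1-c)*(k1-k2)"
    unfolding G fst_conv snd_conv by algebra
  have xdiff: "\<And>t. fst (gam (b1, b2) k1 t) - fst (gam (b1, b2) k2 t)
     = 3*t*(1-t)*c*(k1-k2)"
    unfolding G fst_conv snd_conv by algebra
  have part1: "path_image (gam (b1, b2) k1) \<inter> path_image (gam (b1, b2) k2) \<subseteq> {(0, 0), (b1, b2)}"
  proof
    fix p assume "p \<in> path_image (gam (b1, b2) k1) \<inter> path_image (gam (b1, b2) k2)"
    then obtain t1 t2 where t1: "t1 \<in> {0..1}" and t2: "t2 \<in> {0..1}"
      and p1: "p = gam (b1, b2) k1 t1" and p2: "p = gam (b1, b2) k2 t2"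
      unfolding path_image_def by auto
    have pe: "gam (b1, b2) k1 t1 = gam (b1, b2) k2 t2" using p1 p2 by simp
    have "m*t1^3 + 3*1*t1*(1-t1) = m*t2^3 + 3*1*t2*(1-t2)"
      using W[of k1 t1] W[of k2 t2] unfolding pe by linarith
    hence tt: "t1 = t2" using cubic_inj[OF m1] t1 t2 by auto
    have "3*t1*(1-t1)*(1-c)*(k1-k2) = 0" using ydiff[of t1] pe tt by simp
    moreover have "1-c \<noteq> 0" "k1-k2 \<noteq> 0" using c1 assms by auto
    ultimately have "t1 = 0 \<or> t1 = 1" by simp
    thus "p \<in> {(0, 0), (b1, b2)}" using p1 unfolding G by auto
  qed
  have part2: "\<forall>t1 \<in> {0<..<1}. \<forall>t2 \<in> {0<..<1}.
           fst (gam (b1, b2) k1 t1) = fst (gam (b1, b2) k2 t2) \<longrightarrow>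
           snd (gam (b1, b2) k2 t2) > snd (gam (b1, b2) k1 t1)"
  proof (intro ballI impI)
    fix t1 t2 :: real assume t1: "t1 \<in> {0<..<1}" and t2: "t2 \<in> {0<..<1}"
      and xe: "fst (gam (b1, b2) k1 t1) = fst (gam (b1, b2) k2 t2)"
    show "snd (gam (b1, b2) k2 t2) > snd (gam (b1, b2) k1 t1)"
    proof (rule ccontr)
      assume "\<not> ?thesis"
      hence yle: "snd (gam (b1, b2) k2 t2) \<le> snd (gam (b1, b2) k1 t1)" by simp
      have "m*t2^3 + 3*1*t2*(1-t2) \<le> m*t1^3 + 3*1*t1*(1-t1)"
      proof -
        have "c * snd (gam (b1, b2) k2 t2) \<le> c * snd (gam (b1, b2) k1 t1)"
          using yle c0 by (rule mult_left_mono)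
        moreover have "(1-c) * fst (gam (b1, b2) k2 t2) + c * snd (gam (b1, b2) k1 t1) = m * t1 ^ 3 + 3 * 1 * t1 * (1 - t1)"
          using W[of k1 t1] unfolding xe .
        ultimately show ?thesis using W[of k2 t2] by linarith
      qed
      hence "\<not> t1 < t2" using cubic_mono[OF m1, of t1 t2] t1 t2 by auto
      moreover have "t1 \<noteq> t2"
      proof
        assume e: "t1 = t2"
        have "0 < 3*t1*(1-t1)*(1-c)*(k1-k2)" using t1 c1 assms
          by (intro mult_pos_pos) auto
        thus False using ydiff[of t1] yle unfolding e by linarith
      qed
      ultimately have lt: "t2 < t1" by simp
      have "fst (gam (b1, b2) k2 t2) < fst (gam (b1, b2) k2 t1)"
      proof -
        have "b1*t2^3 + 3*(1 + k2*c)*t2*(1-t2) < b1*t1^3 + 3*(1 + k2*c)*t1*(1-t1)"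
          using cubic_mono[OF ab[OF assms(6,7)], of t2 t1] lt t1 t2 c0 assms
          by (smt (verit) greaterThanLessThan_iff mult_nonneg_nonneg)
        moreover have "\<And>t. fst (gam (b1, b2) k2 t) = b1*t^3 + 3*(1 + k2*c)*t*(1-t)"
          unfolding G fst_conv by algebra
        ultimately show ?thesis by simp
      qed
      moreover have "0 \<le> 3*t1*(1-t1)*c*(k1-k2)" using t1 c0 assms
        by (intro mult_nonneg_nonneg) auto
      ultimately show False using xdiff[of t1] xe by simp
    qed
  qed
  show ?thesis using part1 part2 by blast
qed

end
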